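(* Let $p,q$ be distinct propositional letters and let $M_{pq}=(W,V_{pq})$ be the model with $W=\{w_1,w_2,w_3\}$ in which $p$ is true exactly at $w_1,w_2$, $q$ is true exactly at $w_2,w_3$, and every other letter is true at no world. Let $\varphi(a,b)$ be a context (of propositional dependence logic $\mathcal D$) in which $p,q$ do not occur, and let $\varphi(=\!(p),=\!(q))$ be obtained by replacing $a$ with $=\!(p)$ and $b$ with $=\!(q)$. Then $\varphi(=\!(p),=\!(q))$ is equivalent in $M_{pq}$ to one of: $\top$; $(=\!(p)\land=\!(q))\otimes(=\!(p)\land=\!(q))$; $=\!(p)$; $=\!(q)$; $=\!(p)\land=\!(q)$; $\bot$.
   Context: Formulas of $\mathcal D$: $\varphi::= p\mid\neg p\mid\bot\mid=\!(p_1,\dots,p_n;q)\mid\varphi\land\varphi\mid\varphi\otimes\varphi$ with $p,q,p_i$ propositional letters ($n\ge0$; for $n=0$ the atom is written $=\!(q)$). A context $\varphi(a,b)$ is a $\mathcal D$ formula in which the letters $a,b$ do not occur negated nor inside a dependence atom. A model is $M=(W,V)$, $V(w)$ the set of letters true at $w$. Support at $s\subseteq W$: $s\models p$ iff $p$ true at all $w\in s$; $s\models\neg p$ iff $p$ false at all $w\in s$; $s\models\bot$ iff $s=\emptyset$; $s\models\psi\land\chi$ iff both; $s\models\psi\otimes\chi$ iff $s=t_1\cup t_2$ with $t_1\models\psi$, $t_2\models\chi$; $s\models=\!(p_1,\dots,p_n;q)$ iff any two worlds of $s$ agreeing on all $p_i$ agree on $q$ (so $s\models=\!(q)$ iff $q$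 has the same value throughout $s$). $\top$ denotes a formula supported by every state (in $\mathcal D$, $p\otimes\neg p$). Equivalence in $M$ means being supported by the same states of $M$. *)

theory Defs
  imports Main
begin

datatype 'a form =
    Atom 'a
  | NAtom 'a
  | Bot
  | Dep "'a list" 'a
  | Conj "'a form" "'a form"
  | Tensor "'a form" "'a form"

fun supp :: "('w \<Rightarrow> 'a set) \<Rightarrow> 'w set \<Rightarrow> 'a form \<Rightarrow> bool" where
  "supp V s (Atom p) = (\<forall>w\<in>s. p \<in> V w)"
| "supp V s (NAtom p) = (\<forall>w\<in>s. p \<notin> V w)"
| "supp V s Bot = (s = {})"
| "supp V s (Dep ps q) =
     (\<forall>w\<in>s. \<forall>v\<in>s. (\<forall>x\<in>set ps. (x \<in> V w) = (x \<in> V v)) \<longrightarrow> ((q \<in> V w) = (q \<in> V v)))"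
| "supp V s (Conj f g) = (supp V s f \<and> supp V s g)"
| "supp V s (Tensor f g) = (\<exists>t1 t2. s = t1 \<union> t2 \<and> supp V t1 f \<and> supp V t2 g)"

definition equiv_in :: "'w set \<Rightarrow> ('w \<Rightarrow> 'a set) \<Rightarrow> 'a form \<Rightarrow> 'a form \<Rightarrow> bool" where
  "equiv_in W V f g = (\<forall>s. s \<subseteq> W \<longrightarrow> (supp V s f = supp V s g))"

fun letters :: "'a form \<Rightarrow> 'a set" where
  "letters (Atom p) = {p}"
| "letters (NAtom p) = {p}"
| "letters Bot = {}"
| "letters (Dep ps q) = insert q (set ps)"
| "letters (Conj f g) = letters f \<union> letters g"
| "letters (Tensor f g) = letters f \<union> letters g"

text \<open>phi is a context in a,b: a,b do not occur negated nor inside a dependence atom.\<close>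
fun is_context :: "'a \<Rightarrow> 'a \<Rightarrow> 'a form \<Rightarrow> bool" where
  "is_context a b (Atom p) = True"
| "is_context a b (NAtom p) = (p \<noteq> a \<and> p \<noteq> b)"
| "is_context a b Bot = True"
| "is_context a b (Dep ps q) = (a \<notin> insert q (set ps) \<and> b \<notin> insert q (set ps))"
| "is_context a b (Conj f g) = (is_context a b f \<and> is_context a b g)"
| "is_context a b (Tensor f g) = (is_context a b f \<and> is_context a b g)"

fun subst2 :: "'a \<Rightarrow> 'a \<Rightarrow> 'a form \<Rightarrow> 'a form \<Rightarrow> 'a form \<Rightarrow> 'a form" where
  "subst2 a b psi chi (Atom p) = (if p = a then psi else if p = b then chi else Atom p)"
| "subst2 a b psi chi (NAtom p) = NAtom p"
| "subst2 a b psi chi Bot = Bot"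
| "subst2 a b psi chi (Dep ps q) = Dep ps q"
| "subst2 a b psi chi (Conj f g) = Conj (subst2 a b psi chi f) (subst2 a b psi chi g)"
| "subst2 a b psi chi (Tensor f g) = Tensor (subst2 a b psi chi f) (subst2 a b psi chi g)"

abbreviation const_atom :: "'a \<Rightarrow> 'a form" where
  "const_atom q \<equiv> Dep [] q"

text \<open>The tautology top, rendered in D as p \<otimes> \<not>p.\<close>
definition top_form :: "'a \<Rightarrow> 'a form" where
  "top_form p = Tensor (Atom p) (NAtom p)"

definition W_pq :: "nat set" where
  "W_pq = {1, 2, 3}"

definition V_pq :: "'a \<Rightarrow> 'a \<Rightarrow> nat \<Rightarrow> 'a set" where
  "V_pq p q w = (if w \<in> {1,2} then {p} else {}) \<union> (if w \<in> {2,3} then {q} else {})"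

end

theory Submission
  imports Defs
begin

definition team :: "bool \<Rightarrow> bool \<Rightarrow> bool \<Rightarrow> nat set" where
  "team x y z = (if x then {1} else {}) \<union> (if y then {2} else {}) \<union> (if z then {3::nat} else {})"

lemma team_mem: "(1 \<in> team x y z) = x" "(2 \<in> team x y z) = y" "(3 \<in> team x y z) = z"
  by (auto simp: team_def)

lemma team_sub: "team x y z \<subseteq> W_pq"
  by (auto simp: team_def W_pq_def)

lemma sub_team: "t \<subseteq> W_pq \<Longrightarrow> t = team (1 \<in> t) (2 \<in> t) (3 \<in> t)"
  by (auto simp: team_def W_pq_def)

lemma team_Un: "team a b c \<union> team d e f = team (a \<or> d) (b \<or> e) (c \<or> f)"
  by (auto simp: team_def)

definition fsem :: "'a \<Rightarrow> 'a \<Rightarrow> 'a form \<Rightarrow> bool \<Rightarrow> bool \<Rightarrow> bool \<Rightarrow> bool" where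
  "fsem p q F x y z = supp (V_pq p q) (team x y z) F"

lemma equiv_fsem: "equiv_in W_pq (V_pq p q) F G = (fsem p q F = fsem p q G)"
proof
  assume "equiv_in W_pq (V_pq p q) F G"
  then show "fsem p q F = fsem p q G"
    using team_sub by (auto simp: equiv_in_def fsem_def fun_eq_iff)
next
  assume h: "fsem p q F = fsem p q G"
  show "equiv_in W_pq (V_pq p q) F G"
    unfolding equiv_in_def
  proof (intro allI impI)
    fix s assume "s \<subseteq> W_pq"
    then have "s = team (1 \<in> s) (2 \<in> s) (3 \<in> s)" by (rule sub_team)
    then show "supp (V_pq p q) s F = supp (V_pq p q) s G"
      using h by (metis fsem_def)
  qed
qed

lemma fsem_Conj: "fsem p q (Conj f g) = (\<lambda>x y z. fsem p q f x y z \<and> fsem p q g x y z)"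
  by (auto simp: fsem_def fun_eq_iff)

lemma fsem_Tensor: "fsem p q (Tensor f g) = (\<lambda>x y z. \<exists>a b c d e h. x = (a \<or> d) \<and> y = (b \<or> e) \<and> z = (c \<or> h)
   \<and> fsem p q f a b c \<and> fsem p q g d e h)"
proof (intro ext iffI)
  fix x y z
  assume "fsem p q (Tensor f g) x y z"
  then obtain t1 t2 where t: "team x y z = t1 \<union> t2" "supp (V_pq p q) t1 f" "supp (V_pq p q) t2 g"
    by (auto simp: fsem_def)
  have s1: "t1 \<subseteq> W_pq" "t2 \<subseteq> W_pq" using t(1) team_sub by blast+
  have e1: "t1 = team (1 \<in> t1) (2 \<in> t1) (3 \<in> t1)" "t2 = team (1 \<in> t2) (2 \<in> t2) (3 \<in> t2)"
    using s1 sub_team by blast+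
  have "x = (1 \<in> t1 \<or> 1 \<in> t2)" "y = (2 \<in> t1 \<or> 2 \<in> t2)" "z = (3 \<in> t1 \<or> 3 \<in> t2)"
    using t(1) team_mem by (metis Un_iff)+
  then show "\<exists>a b c d e h. x = (a \<or> d) \<and> y = (b \<or> e) \<and> z = (c \<or> h)
   \<and> fsem p q f a b c \<and> fsem p q g d e h"
    using t e1 unfolding fsem_def by metis
next
  fix x y z
  assume "\<exists>a b c d e h. x = (a \<or> d) \<and> y = (b \<or> e) \<and> z = (c \<or> h)
   \<and> fsem p q f a b c \<and> fsem p q g d e h"
  then obtain a b c d e h where H: "x = (a \<or> d)" "y = (b \<or> e)" "z = (c \<or> h)"
   "fsem p q f a b c" "fsem p q g d e h" by blast
  have "team x y z = team a b c \<union> team d e h" using H(1-3) team_Un by simp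
  then show "fsem p q (Tensor f g) x y z"
    using H(4,5) unfolding fsem_def by auto
qed

definition "fT = (\<lambda>x y z. True)"
definition "fS = (\<lambda>x y z. \<not> (x \<and> y \<and> z))"
definition "fP = (\<lambda>x y z. \<not> (x \<and> z) \<and> \<not> (y \<and> z))"
definition "fQ = (\<lambda>x y z. \<not> (x \<and> y) \<and> \<not> (x \<and> z))"
definition "fPQ = (\<lambda>x y z. fP x y z \<and> fQ x y z)"
definition "fB = (\<lambda>x y z. \<not> x \<and> \<not> y \<and> \<not> z)"

lemmas fdefs = fT_def fS_def fP_def fQ_def fPQ_def fB_def

definition good :: "(bool \<Rightarrow> bool \<Rightarrow> bool \<Rightarrow> bool) \<Rightarrow> bool" where
  "good h = (h = fT \<or> h = fS \<or> h = fP \<or> h = fQ \<or> h = fPQ \<or> h = fB)"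

lemma good_Conj: "good f \<Longrightarrow> good g \<Longrightarrow> good (\<lambda>x y z. f x y z \<and> g x y z)"
  unfolding good_def by (elim disjE; simp add: fdefs fun_eq_iff all_bool_eq; blast)

lemma good_Tensor: "good f \<Longrightarrow> good g \<Longrightarrow> good (\<lambda>x y z. \<exists>a b c d e h. x = (a \<or> d) \<and> y = (b \<or> e) \<and> z = (c \<or> h)
   \<and> f a b c \<and> g d e h)"
  unfolding good_def by (elim disjE; simp add: fdefs fun_eq_iff all_bool_eq ex_bool_eq)

lemma V_other: "r \<noteq> p \<Longrightarrow> r \<noteq> q \<Longrightarrow> r \<notin> V_pq p q w"
  by (auto simp: V_pq_def)

lemma team_empty: "(team x y z = {}) = (\<not> x \<and> \<not> y \<and> \<not> z)"
  by (auto simp: team_def)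

lemma fsem_Atom: "r \<noteq> p \<Longrightarrow> r \<noteq> q \<Longrightarrow> fsem p q (Atom r) = fB"
proof -
  assume "r \<noteq> p" "r \<noteq> q"
  then have "\<And>x y z. supp (V_pq p q) (team x y z) (Atom r) = (team x y z = {})"
    using V_other[of r p q] by (simp; blast)
  then show ?thesis by (auto simp: fsem_def fun_eq_iff fB_def team_empty)
qed

lemma fsem_NAtom: "r \<noteq> p \<Longrightarrow> r \<noteq> q \<Longrightarrow> fsem p q (NAtom r) = fT"
  using V_other[of r p q] by (auto simp: fsem_def fun_eq_iff fT_def)

lemma fsem_Dep: "p \<notin> insert r (set ps) \<Longrightarrow> q \<notin> insert r (set ps) \<Longrightarrow> fsem p q (Dep ps r) = fT"
proof -
  assume a: "p \<notin> insert r (set ps)" "q \<notin> insert r (set ps)"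
  then have "r \<notin> V_pq p q w" for w using V_other[of r p q w] by auto
  then show ?thesis by (auto simp: fsem_def fun_eq_iff fT_def)
qed

lemma fsem_Bot: "fsem p q Bot = fB"
  by (auto simp: fsem_def fun_eq_iff fB_def team_empty)

lemma fsem_cp: "p \<noteq> q \<Longrightarrow> fsem p q (Dep [] p) = fP"
  by (simp add: fsem_def fun_eq_iff fP_def team_def V_pq_def all_bool_eq)

lemma fsem_cq: "p \<noteq> q \<Longrightarrow> fsem p q (Dep [] q) = fQ"
  by (simp add: fsem_def fun_eq_iff fQ_def team_def V_pq_def all_bool_eq)

lemma fsem_Ap: "p \<noteq> q \<Longrightarrow> fsem p q (Atom p) = (\<lambda>x y z. \<not> z)"
  by (simp add: fsem_def fun_eq_iff team_def V_pq_def all_bool_eq)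

lemma fsem_NAp: "p \<noteq> q \<Longrightarrow> fsem p q (NAtom p) = (\<lambda>x y z. \<not> x \<and> \<not> y)"
  by (simp add: fsem_def fun_eq_iff team_def V_pq_def all_bool_eq)

lemma fsem_top: "p \<noteq> q \<Longrightarrow> fsem p q (top_form p) = fT"
  by (simp add: fsem_Tensor top_form_def fsem_Ap fsem_NAp fun_eq_iff fT_def ex_bool_eq)

lemma main: "p \<noteq> q \<Longrightarrow> is_context a b phi \<Longrightarrow> p \<notin> letters phi \<Longrightarrow> q \<notin> letters phi
  \<Longrightarrow> good (fsem p q (subst2 a b (Dep [] p) (Dep [] q) phi))"
proof (induction phi)
  case (Atom r)
  then show ?case using fsem_cp[OF Atom(1)] fsem_cq[OF Atom(1)] fsem_Atom[of r p q]
    by (auto simp: good_def)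
next
  case (NAtom r)
  then show ?case using fsem_NAtom[of r p q] by (auto simp: good_def)
next
  case Bot
  then show ?case by (simp add: fsem_Bot good_def)
next
  case (Dep ps r)
  then show ?case using fsem_Dep[of p r ps q] by (auto simp: good_def)
next
  case (Conj f g)
  have "good (fsem p q (subst2 a b (Dep [] p) (Dep [] q) f))" "good (fsem p q (subst2 a b (Dep [] p) (Dep [] q) g))"
    using Conj by simp_all
  then show ?case unfolding subst2.simps fsem_Conj by (rule good_Conj)
next
  case (Tensor f g)
  have "good (fsem p q (subst2 a b (Dep [] p) (Dep [] q) f))" "good (fsem p q (subst2 a b (Dep [] p) (Dep [] q) g))"
    using Tensor by simp_all
  then show ?case unfolding subst2.simps fsem_Tensor by (rule good_Tensor)
qed

lemma tPQ: "(\<lambda>x y z. \<exists>a b c d e h. x = (a \<or> d) \<and> y = (b \<or> e) \<and> z = (c \<or> h)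
   \<and> fPQ a b c \<and> fPQ d e h) = fS"
  by (simp add: fdefs fun_eq_iff all_bool_eq ex_bool_eq)

theorem lemma5:
  fixes p q a b :: 'a and phi :: "'a form"
  assumes "p \<noteq> q" and "a \<noteq> b"
    and "is_context a b phi"
    and "p \<notin> letters phi" and "q \<notin> letters phi"
  shows "let F = subst2 a b (const_atom p) (const_atom q) phi;
             E = equiv_in W_pq (V_pq p q) F
         in E (top_form p)
          \<or> E (Tensor (Conj (const_atom p) (const_atom q)) (Conj (const_atom p) (const_atom q)))
          \<or> E (const_atom p)
          \<or> E (const_atom q)
          \<or> E (Conj (const_atom p) (const_atom q))
          \<or> E Bot"
proof -
  have g: "good (fsem p q (subst2 a b (Dep [] p) (Dep [] q) phi))"
    using main[OF assms(1,3,4,5)] .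
  have pq: "fsem p q (Conj (const_atom p) (const_atom q)) = fPQ"
    using assms(1) by (simp add: fsem_Conj fsem_cp fsem_cq fPQ_def)
  have s: "fsem p q (Tensor (Conj (const_atom p) (const_atom q)) (Conj (const_atom p) (const_atom q))) = fS"
    unfolding fsem_Tensor pq by (rule tPQ)
  show ?thesis unfolding Let_def equiv_fsem s pq fsem_top[OF assms(1)] fsem_cp[OF assms(1)] fsem_cq[OF assms(1)] fsem_Bot
    using g unfolding good_def .
qed

end
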